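(* Let $\mathcal E$ be a finite dimensional Hilbert space and let $\psi_1\in\mathcal C$ satisfy $$0\ge\operatorname{Re}\big[(\psi_1(z)+I)(\psi_1(z)-I)^{-1}\big]\ge\operatorname{Re}\big[(z+1)(z-1)^{-1}\big]I\quad\text{for all }z\in\mathbb D. \quad ( * )$$ Then there exists a unique $\psi_2\in\mathcal C$ satisfying $( * )$ (with $\psi_2$ in place of $\psi_1$) such that $(\psi_1,\psi_2)$ is a factorizing pair.
   Context: $\mathbb D$ is the open unit disc, $H^2_{\mathbb D}(\mathcal E)$ the $\mathcal E$-valued Hardy space, $M_\psi$ multiplication by $\psi$, and $\operatorname{Re}X=(X+X^* )/2$. $\mathcal C=\{\psi\in H^\infty_{\mathbb D}(\mathcal B(\mathcal E)):\sup_z\|\psi(z)\|\le1,\ 1\text{ is not an eigenvalue of }\psi(z)\text{ for any }z\in\mathbb D\}$. $\varphi_t(\lambda)=e^{t\frac{\lambda+1}{\lambda-1}}$, $(\varphi_t\circ\psi)(z)=\varphi_t(\psi(z))$, $\mathfrak z^{\mathcal E}(w)=wI_{\mathcal E}$. A pair $(\psi_1,\psi_2)$ in $\mathcal C$ is a factorizing pair if $M_{\varphi_t\circ\psi_1}M_{\varphi_t\circ\psi_2}=M_{\varphi_t\circ\psi_2}M_{\varphi_t\circ\psi_1}=M_{\varphi_t\circ\mathfrak z^{\mathcal E}}$ for all $t\ge0$. *)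

theory Defs
  imports "HOL-Analysis.Analysis"
begin

text \<open>The finite-dimensional Hilbert space E is modelled as complex^'n for a finite type 'n;
  operators on E are complex matrices complex^'n^'n acting by *v.\<close>

type_synonym 'n op = "complex^'n^'n"

definition unit_disc :: "complex set" where
  "unit_disc = ball 0 1"

definition smat :: "complex \<Rightarrow> 'n::finite op \<Rightarrow> 'n op" where
  "smat c A = (\<chi> i j. c * A $ i $ j)"

definition adj :: "'n::finite op \<Rightarrow> 'n op" where
  "adj A = (\<chi> i j. cnj (A $ j $ i))"

definition op_re :: "'n::finite op \<Rightarrow> 'n op" where
  "op_re X = smat (1/2) (X + adj X)"

definition op_norm :: "'n::finite op \<Rightarrow> real" where
  "op_norm A = onorm (\<lambda>x. A *v x)"

definition loewner_le :: "'n::finite op \<Rightarrow> 'n op \<Rightarrow> bool" where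
  "loewner_le A B \<longleftrightarrow>
     (\<forall>x::complex^'n. let q = (\<Sum>i\<in>UNIV. cnj (x $ i) * ((B - A) *v x) $ i)
                     in Im q = 0 \<and> Re q \<ge> 0)"

fun mpow :: "'n::finite op \<Rightarrow> nat \<Rightarrow> 'n op" where
  "mpow A 0 = mat 1"
| "mpow A (Suc k) = A ** mpow A k"

definition mexp :: "'n::finite op \<Rightarrow> 'n op" where
  "mexp A = (\<Sum>k. smat (inverse (of_nat (fact k))) (mpow A k))"

definition cayley :: "'n::finite op \<Rightarrow> 'n op" where
  "cayley A = (A + mat 1) ** matrix_inv (A - mat 1)"

text \<open>phi_t(A) = exp(t (A+I)(A-I)^{-1}) (holomorphic functional calculus of
  phi_t(lambda) = e^{t(lambda+1)/(lambda-1)}, for A without eigenvalue 1).\<close>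
definition phi :: "real \<Rightarrow> 'n::finite op \<Rightarrow> 'n op" where
  "phi t A = mexp (smat (complex_of_real t) (cayley A))"

definition phi_comp :: "real \<Rightarrow> (complex \<Rightarrow> 'n::finite op) \<Rightarrow> complex \<Rightarrow> 'n op" where
  "phi_comp t \<psi> = (\<lambda>z. phi t (\<psi> z))"

definition zE :: "complex \<Rightarrow> 'n::finite op" where
  "zE z = mat z"

definition Hinf :: "(complex \<Rightarrow> 'n::finite op) set" where
  "Hinf = {\<psi>. (\<forall>i j. (\<lambda>z. \<psi> z $ i $ j) holomorphic_on unit_disc)
              \<and> (\<exists>B. \<forall>z\<in>unit_disc. op_norm (\<psi> z) \<le> B)}"

definition classC :: "(complex \<Rightarrow> 'n::finite op) set" where
  "classC = {\<psi>. \<psi> \<in> Hinf \<and> (\<forall>z\<in>unit_disc. op_norm (\<psi> z) \<le> 1)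
               \<and> (\<forall>z\<in>unit_disc. \<not> (\<exists>x. x \<noteq> 0 \<and> \<psi> z *v x = x))}"

definition H2 :: "(complex \<Rightarrow> complex^'n::finite) set" where
  "H2 = {f. (\<forall>i. (\<lambda>z. f z $ i) holomorphic_on unit_disc)
           \<and> (\<forall>z. z \<notin> unit_disc \<longrightarrow> f z = 0)
           \<and> (\<exists>B. \<forall>r. 0 < r \<and> r < 1 \<longrightarrow>
                 (\<lambda>\<theta>. (norm (f (of_real r * cis \<theta>)))\<^sup>2) integrable_on {0..2*pi}
               \<and> integral {0..2*pi} (\<lambda>\<theta>. (norm (f (of_real r * cis \<theta>)))\<^sup>2) \<le> B)}"

definition Mult :: "(complex \<Rightarrow> 'n::finite op) \<Rightarrow> (complex \<Rightarrow> complex^'n) \<Rightarrow> (complex \<Rightarrow> complex^'n)" where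
  "Mult \<psi> f = (\<lambda>z. if z \<in> unit_disc then \<psi> z *v f z else 0)"

definition op_eq_H2 :: "((complex \<Rightarrow> complex^'n::finite) \<Rightarrow> (complex \<Rightarrow> complex^'n))
     \<Rightarrow> ((complex \<Rightarrow> complex^'n) \<Rightarrow> (complex \<Rightarrow> complex^'n)) \<Rightarrow> bool" where
  "op_eq_H2 S T \<longleftrightarrow> (\<forall>f\<in>H2. S f = T f)"

definition factorizing_pair :: "(complex \<Rightarrow> 'n::finite op) \<Rightarrow> (complex \<Rightarrow> 'n op) \<Rightarrow> bool" where
  "factorizing_pair \<psi>1 \<psi>2 \<longleftrightarrow> \<psi>1 \<in> classC \<and> \<psi>2 \<in> classC \<and>
     (\<forall>t::real. t \<ge> 0 \<longrightarrow>
        op_eq_H2 (Mult (phi_comp t \<psi>1) \<circ> Mult (phi_comp t \<psi>2)) (Mult (phi_comp t zE))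
      \<and> op_eq_H2 (Mult (phi_comp t \<psi>2) \<circ> Mult (phi_comp t \<psi>1)) (Mult (phi_comp t zE)))"

definition cond_star :: "(complex \<Rightarrow> 'n::finite op) \<Rightarrow> bool" where
  "cond_star \<psi> \<longleftrightarrow> (\<forall>z\<in>unit_disc.
      loewner_le (op_re (cayley (\<psi> z))) 0
    \<and> loewner_le (mat (complex_of_real (Re ((z + 1) / (z - 1))))) (op_re (cayley (\<psi> z))))"

end

theory Submission
  imports Defs
begin


lemma lin_mv: "linear (\<lambda>x::complex^'n::finite. (A::complex^'n^'n) *v x)"
  by (rule linearI) (auto simp: vec_eq_iff matrix_vector_mult_def sum.distrib algebra_simps scaleR_sum_right)

lemma bl_mv: "bounded_linear (\<lambda>x::complex^'n::finite. (A::complex^'n^'n) *v x)"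
  using lin_mv linear_conv_bounded_linear by blast

lemma mv_eq_0: "(\<forall>x. (A::complex^'n::finite^'n) *v x = 0) \<longleftrightarrow> A = 0"
  by (metis matrix_eq matrix_vector_mult_0 matrix_vector_mult_0_right)

lemma scaleR_mv: "(r *\<^sub>R (A::complex^'n::finite^'n)) *v x = r *\<^sub>R (A *v x)"
  by (simp add: vec_eq_iff matrix_vector_mult_def scaleR_sum_right)

typedef (overloaded) 'n mtx = "UNIV :: (complex^'n::finite^'n) set" morphisms RM AM by simp
setup_lifting type_definition_mtx

instantiation mtx :: (finite) real_normed_vector
begin
lift_definition zero_mtx :: "'a mtx" is 0 .
lift_definition plus_mtx :: "'a mtx \<Rightarrow> 'a mtx \<Rightarrow> 'a mtx" is "(+)" .
lift_definition minus_mtx :: "'a mtx \<Rightarrow> 'a mtx \<Rightarrow> 'a mtx" is "(-)" .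
lift_definition uminus_mtx :: "'a mtx \<Rightarrow> 'a mtx" is "uminus" .
lift_definition scaleR_mtx :: "real \<Rightarrow> 'a mtx \<Rightarrow> 'a mtx" is "scaleR" .
lift_definition norm_mtx :: "'a mtx \<Rightarrow> real" is "op_norm" .
definition dist_mtx :: "'a mtx \<Rightarrow> 'a mtx \<Rightarrow> real" where "dist_mtx a b = norm (a - b)"
definition uniformity_mtx :: "('a mtx \<times> 'a mtx) filter" where
  "uniformity_mtx = (INF e\<in>{0 <..}. principal {(x, y). dist x y < e})"
definition open_mtx :: "'a mtx set \<Rightarrow> bool" where
  "open_mtx S = (\<forall>x\<in>S. \<forall>\<^sub>F (x', y) in uniformity. x' = x \<longrightarrow> y \<in> S)"
definition sgn_mtx :: "'a mtx \<Rightarrow> 'a mtx" where "sgn_mtx x = scaleR (inverse (norm x)) x"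
instance
proof
  show "dist x y = norm (x - y)" for x y :: "'a mtx" by (simp add: dist_mtx_def)
  show "sgn x = inverse (norm x) *\<^sub>R x" for x :: "'a mtx" by (simp add: sgn_mtx_def)
  show "(uniformity :: ('a mtx \<times> 'a mtx) filter) = (INF e\<in>{0 <..}. principal {(x, y). dist x y < e})"
    by (simp add: uniformity_mtx_def)
  show "open U = (\<forall>x\<in>U. \<forall>\<^sub>F (x', y) in uniformity. x' = x \<longrightarrow> y \<in> U)" for U :: "'a mtx set"
    by (simp add: open_mtx_def)
  show "(a + b) + c = a + (b + c)" for a b c :: "'a mtx" by transfer (simp add: algebra_simps)
  show "a + b = b + a" for a b :: "'a mtx" by transfer (simp add: algebra_simps)
  show "0 + a = a" for a :: "'a mtx" by transfer simp
  show "- a + a = 0" for a :: "'a mtx" by transfer simp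
  show "a - b = a + - b" for a b :: "'a mtx" by transfer simp
  show "r *\<^sub>R (a + b) = r *\<^sub>R a + r *\<^sub>R b" for r and a b :: "'a mtx" by transfer (simp add: scaleR_add_right)
  show "(r + s) *\<^sub>R a = r *\<^sub>R a + s *\<^sub>R a" for r s and a :: "'a mtx" by transfer (simp add: scaleR_add_left)
  show "r *\<^sub>R s *\<^sub>R a = (r * s) *\<^sub>R a" for r s and a :: "'a mtx" by transfer simp
  show "1 *\<^sub>R a = a" for a :: "'a mtx" by transfer simp
  show "norm x = 0 \<longleftrightarrow> x = 0" for x :: "'a mtx"
    by transfer (simp add: op_norm_def onorm_eq_0[OF bl_mv] mv_eq_0)
  show "norm (x + y) \<le> norm x + norm y" for x y :: "'a mtx"
    apply transfer
    using onorm_triangle[OF bl_mv bl_mv] by (simp add: op_norm_def matrix_vector_mult_add_rdistrib)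
  show "norm (r *\<^sub>R x) = \<bar>r\<bar> * norm x" for r and x :: "'a mtx"
    apply transfer
    using onorm_scaleR[OF bl_mv] by (simp add: op_norm_def scaleR_mv)
qed
end

lemma norm_le_l1': "norm (x::'a::real_normed_vector^'n::finite) \<le> (\<Sum>i\<in>UNIV. norm (x$i))"
  by (simp add: norm_vec_def L2_set_le_sum)

lemma mv_axis: "((A::complex^'n::finite^'n) *v axis j 1) $ i = A $ i $ j"
  by (simp add: matrix_vector_mult_def axis_def if_distrib cong: if_cong)

lemma norm_axis1: "norm (axis (j::'n::finite) (1::complex)) = 1"
proof -
  have s: "(\<Sum>i\<in>UNIV. (norm (axis j (1::complex) $ i))\<^sup>2) = (\<Sum>i\<in>UNIV. if i = j then 1 else (0::real))"
    by (rule sum.cong) (auto simp: axis_def)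
  then show ?thesis by (simp add: norm_vec_def L2_set_def)
qed


lemma entry_le_opnorm: "cmod ((A::complex^'n::finite^'n) $ i $ j) \<le> op_norm A"
proof -
  have "norm ((A *v axis j 1) $ i) \<le> norm (A *v axis j 1)" by (rule Finite_Cartesian_Product.norm_nth_le)
  then have "cmod (A $ i $ j) \<le> norm (A *v axis j 1)" by (simp only: mv_axis)
  also have "\<dots> \<le> op_norm A * norm (axis j (1::complex))"
    unfolding op_norm_def by (rule onorm[OF bl_mv])
  finally show ?thesis by (simp add: norm_axis1)
qed

lemma vecnorm_le_opnorm: "norm (A::complex^'n::finite^'n) \<le> real (CARD('n) * CARD('n)) * op_norm A"
proof -
  have "norm A \<le> (\<Sum>i\<in>UNIV. norm (A$i))" by (rule norm_le_l1')
  also have "\<dots> \<le> (\<Sum>i\<in>(UNIV::'n set). \<Sum>j\<in>(UNIV::'n set). op_norm A)"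
    apply (rule sum_mono) apply (rule order_trans[OF norm_le_l1']) apply (rule sum_mono) by (rule entry_le_opnorm)
  finally show ?thesis by simp
qed

lemma opnorm_le_vecnorm: "op_norm (A::complex^'n::finite^'n) \<le> real (CARD('n) * CARD('n)) * norm A"
  unfolding op_norm_def
proof (rule onorm_le)
  fix x :: "complex^'n"
  have "norm (A *v x) \<le> (\<Sum>i\<in>UNIV. norm ((A *v x)$i))" by (rule norm_le_l1')
  also have "\<dots> \<le> (\<Sum>i\<in>(UNIV::'n set). \<Sum>j\<in>(UNIV::'n set). norm A * norm x)"
  proof (rule sum_mono)
    fix i
    have "norm ((A *v x)$i) = norm (\<Sum>j\<in>UNIV. A$i$j * x$j)" by (simp add: matrix_vector_mult_def)
    also have "\<dots> \<le> (\<Sum>j\<in>UNIV. norm (A$i$j * x$j))" by (rule norm_sum)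
    also have "\<dots> \<le> (\<Sum>j\<in>(UNIV::'n set). norm A * norm x)"
    proof (rule sum_mono)
      fix j
      have "norm (A$i$j) \<le> norm A" by (metis Finite_Cartesian_Product.norm_nth_le order_trans)
      moreover have "norm (x$j) \<le> norm x" by (rule Finite_Cartesian_Product.norm_nth_le)
      ultimately show "norm (A$i$j * x$j) \<le> norm A * norm x"
        by (simp add: norm_mult mult_mono)
    qed
    finally show "norm ((A *v x)$i) \<le> (\<Sum>j\<in>(UNIV::'n set). norm A * norm x)" .
  qed
  finally show "norm (A *v x) \<le> real (CARD('n) * CARD('n)) * norm A * norm x" by simp
qed

instantiation mtx :: (finite) real_normed_algebra_1
begin
lift_definition one_mtx :: "'a mtx" is "mat 1" .
lift_definition times_mtx :: "'a mtx \<Rightarrow> 'a mtx \<Rightarrow> 'a mtx" is "(**)" .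
instance
proof
  show "a * b * c = a * (b * c)" for a b c :: "'a mtx" by transfer (simp add: matrix_mul_assoc)
  show "1 * a = a" for a :: "'a mtx" by transfer simp
  show "a * 1 = a" for a :: "'a mtx" by transfer simp
  show "(a + b) * c = a * c + b * c" for a b c :: "'a mtx" by transfer (simp add: matrix_matrix_mult_def vec_eq_iff sum.distrib algebra_simps)
  show "a * (b + c) = a * b + a * c" for a b c :: "'a mtx" by transfer (simp add: matrix_add_ldistrib)
  show "(0::'a mtx) \<noteq> 1" apply transfer by (auto simp: vec_eq_iff mat_def)
  show "r *\<^sub>R a * b = r *\<^sub>R (a * b)" for r and a b :: "'a mtx"
    by transfer (simp add: vec_eq_iff matrix_matrix_mult_def scaleR_sum_right)
  show "a * r *\<^sub>R b = r *\<^sub>R (a * b)" for r and a b :: "'a mtx"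
    by transfer (simp add: vec_eq_iff matrix_matrix_mult_def scaleR_sum_right)
  show "norm (x * y) \<le> norm x * norm y" for x y :: "'a mtx"
    apply transfer unfolding op_norm_def
    using onorm_compose[OF bl_mv bl_mv] by (simp add: o_def matrix_vector_mul_assoc)
  show "norm (1::'a mtx) = 1"
    apply transfer unfolding op_norm_def
  proof -
    have "(*v) (mat 1::complex^'a^'a) = (\<lambda>x. x)" by (rule ext) simp
    then show "onorm ((*v) (mat 1::complex^'a^'a)) = 1" using onorm_id by simp
  qed
qed
end

lemma bl_RM: "bounded_linear (RM :: 'n::finite mtx \<Rightarrow> _)"
  apply (rule bounded_linear_intro[where K="real (CARD('n) * CARD('n))"])
    apply (simp add: plus_mtx.rep_eq)
   apply (simp add: scaleR_mtx.rep_eq)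
  by (simp add: norm_mtx.rep_eq) (metis vecnorm_le_opnorm mult.commute of_nat_mult)

lemma bl_AM: "bounded_linear (AM :: _ \<Rightarrow> 'n::finite mtx)"
  apply (rule bounded_linear_intro[where K="real (CARD('n) * CARD('n))"])
  apply (metis plus_mtx.abs_eq) apply (metis scaleR_mtx.abs_eq)
  by (simp add: norm_mtx.abs_eq) (metis opnorm_le_vecnorm mult.commute of_nat_mult)

instance mtx :: (finite) banach
proof
  fix X :: "nat \<Rightarrow> 'a mtx" assume "Cauchy X"
  then have "Cauchy (\<lambda>n. RM (X n))" by (rule bounded_linear.Cauchy[OF bl_RM])
  then obtain L where "(\<lambda>n. RM (X n)) \<longlonglongrightarrow> L" using Cauchy_convergent_iff convergent_def by blast
  then have "(\<lambda>n. AM (RM (X n))) \<longlonglongrightarrow> AM L" by (rule bounded_linear.tendsto[OF bl_AM])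
  then have "X \<longlonglongrightarrow> AM L" by (simp add: RM_inverse)
  then show "convergent X" unfolding convergent_def by blast
qed



lift_definition MI :: "'n::finite mtx \<Rightarrow> 'n mtx" is matrix_inv .
lift_definition MS :: "complex \<Rightarrow> 'n::finite mtx" is mat .
definition cayM :: "'n::finite mtx \<Rightarrow> 'n mtx" where "cayM x = (x + 1) * MI (x - 1)"

lemma RM_mult: "RM (x * y) = RM x ** RM y" by (simp add: times_mtx.rep_eq)
lemma RM_one: "RM 1 = mat 1" by (simp add: one_mtx.rep_eq)
lemma RM_plus: "RM (x + y) = RM x + RM y" by (simp add: plus_mtx.rep_eq)
lemma RM_minus: "RM (x - y) = RM x - RM y" by (simp add: minus_mtx.rep_eq)
lemma RM_scaleR: "RM (r *\<^sub>R x) = r *\<^sub>R RM x" by (simp add: scaleR_mtx.rep_eq)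
lemma RM_zero: "RM 0 = 0" by (simp add: zero_mtx.rep_eq)
lemma RM_MS: "RM (MS c) = mat c" by (simp add: MS.rep_eq)
lemma RM_MI: "RM (MI x) = matrix_inv (RM x)" by (simp add: MI.rep_eq)
lemma RM_inj: "RM x = RM y \<Longrightarrow> x = y" by (simp add: RM_inject)

lemma cayley_RM: "cayley A = RM (cayM (AM A))"
  by (simp add: cayley_def cayM_def RM_mult RM_plus RM_MI RM_minus RM_one AM_inverse)

lemma MI_eq: assumes "x * y = 1" "y * x = 1" shows "MI x = y"
proof -
  have h: "RM x ** RM y = mat 1" "RM y ** RM x = mat 1" using assms by (metis RM_mult RM_one)+
  then have "\<exists>A'. RM x ** A' = mat 1 \<and> A' ** RM x = mat 1" by blast
  then have s: "RM x ** matrix_inv (RM x) = mat 1 \<and> matrix_inv (RM x) ** RM x = mat 1"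
    unfolding matrix_inv_def by (rule someI_ex)
  have "matrix_inv (RM x) = matrix_inv (RM x) ** (RM x ** RM y)" using h by simp
  also have "\<dots> = RM y" using s by (simp add: matrix_mul_assoc)
  finally show ?thesis by (metis RM_MI RM_inj)
qed

lemma inv_from_inj: assumes "\<And>v. RM x *v v = 0 \<Longrightarrow> v = 0" shows "\<exists>y. x * y = 1 \<and> y * x = 1"
proof -
  have "\<exists>B. B ** RM x = mat 1" using assms matrix_left_invertible_ker by blast
  then have "invertible (RM x)" using invertible_left_inverse by blast
  then obtain B where "RM x ** B = mat 1" "B ** RM x = mat 1" unfolding invertible_def by blast
  then have "x * AM B = 1" "AM B * x = 1" by (metis AM_inverse RM_mult RM_one RM_inj UNIV_I)+
  then show ?thesis by blast
qed

lemma half_two: "(1/2::real) *\<^sub>R (2::'a::real_algebra_1) = 1"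
proof -
  have "(2::'a) = of_real 2" by simp
  then have "(1/2::real) *\<^sub>R (2::'a) = of_real (1/2) * of_real 2" by (simp add: scaleR_conv_of_real)
  also have "\<dots> = of_real ((1/2) * 2)" by (simp only: of_real_mult)
  finally show ?thesis by simp
qed

lemma half_half: "(1/2::real) *\<^sub>R x + (1/2::real) *\<^sub>R x = (x::'a::real_vector)"
proof -
  have "(1/2::real) + 1/2 = 1" by simp
  then show ?thesis by (metis scaleR_add_left scaleR_one)
qed

lemma cay_basic:
  fixes a b :: "'n::finite mtx"
  assumes "b * (a - 1) = 1" "(a - 1) * b = 1"
  shows "cayM a = (a + 1) * b" "cayM a - 1 = 2 * b" "b * a = a * b"
proof -
  show c: "cayM a = (a + 1) * b" using MI_eq[OF assms(2,1)] by (simp add: cayM_def)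
  have "(a + 1) * b - 1 = (a + 1) * b - (a - 1) * b" using assms by simp
  also have "\<dots> = 2 * b" by (simp add: algebra_simps mult_2)
  finally show "cayM a - 1 = 2 * b" using c by simp
  have "b * a - b = a * b - b" using assms by (simp add: algebra_simps)
  then show "b * a = a * b" by simp
qed

lemma cay_invol:
  fixes a :: "'n::finite mtx"
  assumes "b * (a - 1) = 1" "(a - 1) * b = 1"
  shows "cayM (cayM a) = a" "\<exists>u. (cayM a - 1) * u = 1 \<and> u * (cayM a - 1) = 1"
proof -
  note cb = cay_basic[OF assms]
  define u where "u = (1/2::real) *\<^sub>R (a - 1)"
  have u1: "(cayM a - 1) * u = 1" unfolding cb(2) u_def using assms(1)
    by (simp add: mult.assoc[symmetric] cb(3) ) (simp add: algebra_simps half_two)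
  have u2: "u * (cayM a - 1) = 1"
  proof -
    have "u * (cayM a - 1) = (1/2::real) *\<^sub>R ((a - 1) * b + (a - 1) * b)"
      unfolding cb(2) u_def by (simp add: mult_2 distrib_left half_half)
    also have "\<dots> = 1" using assms(2) by (simp add: half_two flip: mult_2)
    finally show ?thesis .
  qed
  show "\<exists>u. (cayM a - 1) * u = 1 \<and> u * (cayM a - 1) = 1" using u1 u2 by blast
  have "MI (cayM a - 1) = u" by (rule MI_eq[OF u1 u2])
  then have "cayM (cayM a) = (cayM a + 1) * u" by (simp add: cayM_def)
  also have "cayM a + 1 = 2 * (a * b)"
  proof -
    have "cayM a + 1 = (a + 1) * b + (a - 1) * b" using cb(1) assms(2) by simp
    also have "\<dots> = 2 * (a * b)" by (simp add: algebra_simps half_two mult_2)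
    finally show ?thesis .
  qed
  also have "2 * (a * b) * u = a * (b * (a - 1))" unfolding u_def by (simp add: algebra_simps half_two)
  finally show "cayM (cayM a) = a" using assms(1) by simp
qed



lemma smat_real: "smat (complex_of_real r) M = r *\<^sub>R M"
  by (simp add: smat_def vec_eq_iff) (simp add: scaleR_conv_of_real)

lemma RM_pow: "RM (x ^ k) = mpow (RM x) k"
  by (induct k) (simp_all add: RM_one RM_mult)

lemma mexp_RM: "mexp M = RM (exp (AM M))"
proof -
  let ?x = "AM M"
  have sm: "summable (\<lambda>n. ?x ^ n /\<^sub>R fact n)" by (rule summable_exp_generic)
  have "RM (exp ?x) = RM (\<Sum>n. ?x ^ n /\<^sub>R fact n)" by (simp add: exp_def)
  also have "\<dots> = (\<Sum>n. RM (?x ^ n /\<^sub>R fact n))" by (rule bounded_linear.suminf[OF bl_RM sm])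
  also have "\<dots> = (\<Sum>n. smat (inverse (of_nat (fact n))) (mpow M n))"
  proof -
    have "RM (?x ^ n /\<^sub>R fact n) = smat (inverse (of_nat (fact n))) (mpow M n)" for n
    proof -
      have "smat (inverse (of_nat (fact n))) (mpow M n) = smat (complex_of_real (inverse (fact n))) (mpow M n)"
        by (simp add: of_real_inverse)
      also have "\<dots> = inverse (fact n) *\<^sub>R mpow M n" by (rule smat_real)
      finally show ?thesis by (simp add: RM_scaleR RM_pow AM_inverse)
    qed
    then show ?thesis by simp
  qed
  finally show ?thesis by (simp add: mexp_def)
qed

lemma phi_RM: "phi t A = RM (exp (t *\<^sub>R cayM (AM A)))"
proof -
  have "phi t A = mexp (t *\<^sub>R cayley A)" by (simp add: phi_def smat_real)
  also have "\<dots> = RM (exp (AM (t *\<^sub>R cayley A)))" by (rule mexp_RM)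
  also have "AM (t *\<^sub>R cayley A) = t *\<^sub>R cayM (AM A)"
    by (metis RM_inverse RM_scaleR cayley_RM)
  finally show ?thesis .
qed

lemma exp_deriv0:
  fixes a b c :: "'a::{real_normed_algebra_1,banach}"
  assumes "\<And>t. t \<ge> 0 \<Longrightarrow> exp (t *\<^sub>R a) * exp (t *\<^sub>R b) = exp (t *\<^sub>R c)"
  shows "a + b = c"
proof -
  have d1: "((\<lambda>t. exp (t *\<^sub>R a) * exp (t *\<^sub>R b)) has_vector_derivative
       (exp (0 *\<^sub>R a) * (exp (0 *\<^sub>R b) * b) + (exp (0 *\<^sub>R a) * a) * exp (0 *\<^sub>R b))) (at 0 within {0..})"
    by (intro has_vector_derivative_mult exp_scaleR_has_vector_derivative_right)
  then have d1s: "((\<lambda>t. exp (t *\<^sub>R a) * exp (t *\<^sub>R b)) has_vector_derivative (b + a)) (at 0 within {0..})"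
    by simp
  then have d1': "((\<lambda>t. exp (t *\<^sub>R c)) has_vector_derivative (b + a)) (at 0 within {0..})"
    by (rule has_vector_derivative_transform_within[where d=1]) (auto simp: assms)
  have d2: "((\<lambda>t. exp (t *\<^sub>R c)) has_vector_derivative (exp (0 *\<^sub>R c) * c)) (at 0 within {0..})"
    by (rule exp_scaleR_has_vector_derivative_right)
  have nb: "at (0::real) within {0..} \<noteq> bot" by (simp add: at_within_Ici_at_right)
  have "b + a = exp (0 *\<^sub>R c) * c" by (rule vector_derivative_unique_within[OF nb d1' d2])
  then show ?thesis by (simp add: add.commute)
qed



definition qf :: "complex^'n::finite^'n \<Rightarrow> complex^'n \<Rightarrow> complex" where
  "qf M x = (\<Sum>i\<in>UNIV. cnj (x$i) * (M *v x)$i)"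

definition nsq :: "complex^'n::finite \<Rightarrow> real" where
  "nsq x = (\<Sum>i\<in>UNIV. (cmod (x$i))\<^sup>2)"

lemma nsq_norm: "nsq x = (norm x)\<^sup>2"
  by (simp add: nsq_def norm_vec_def L2_set_def sum_nonneg)

lemma qf_add: "qf (M + N) x = qf M x + qf N x"
  by (simp add: qf_def matrix_vector_mult_add_rdistrib sum.distrib algebra_simps)

lemma qf_diff: "qf (M - N) x = qf M x - qf N x"
  by (simp add: qf_def matrix_vector_mult_diff_rdistrib sum_subtractf algebra_simps)

lemma qf_uminus: "qf (- M) x = - qf M x"
  by (simp add: qf_def matrix_vector_mult_def sum_negf)

lemma qf_zero: "qf 0 x = 0"
  by (simp add: qf_def)

lemma mat_mv: "(mat c *v x) $ i = c * (x $ i :: complex)"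
  by (simp add: matrix_vector_mult_def mat_def if_distrib if_distribR sum.delta cong: if_cong)

lemma qf_mat: "qf (mat c) x = c * of_real (nsq x)"
proof -
  have "qf (mat c) x = (\<Sum>i\<in>UNIV. c * (x$i * cnj (x$i)))" unfolding qf_def mat_mv
    by (simp add: algebra_simps)
  also have "\<dots> = (\<Sum>i\<in>UNIV. c * of_real ((cmod (x$i))\<^sup>2))" by (simp only: complex_norm_square)
  finally show ?thesis by (simp add: nsq_def sum_distrib_left)
qed

lemma qf_id: "qf M x = of_real (nsq x)" if "M *v x = x"
proof -
  have "qf M x = (\<Sum>i\<in>UNIV. of_real ((cmod (x$i))\<^sup>2))" unfolding qf_def that
    by (rule sum.cong) (simp_all only: complex_norm_square mult.commute)
  then show ?thesis by (simp only: nsq_def of_real_sum)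
qed

lemma qf_adj: "qf (adj M) x = cnj (qf M x)"
proof -
  have "qf (adj M) x = (\<Sum>i\<in>UNIV. \<Sum>j\<in>UNIV. cnj (x$i) * cnj (M$j$i) * x$j)"
    by (simp add: qf_def adj_def matrix_vector_mult_def sum_distrib_left mult.assoc)
  also have "\<dots> = (\<Sum>j\<in>UNIV. \<Sum>i\<in>UNIV. cnj (x$i) * cnj (M$j$i) * x$j)" by (rule sum.swap)
  also have "\<dots> = (\<Sum>j\<in>UNIV. \<Sum>i\<in>UNIV. x$j * (cnj (M$j$i) * cnj (x$i)))" by (simp add: ac_simps)
  also have "\<dots> = cnj (qf M x)"
    by (simp add: qf_def matrix_vector_mult_def sum_distrib_left)
  finally show ?thesis .
qed

lemma qf_smat: "qf (smat c M) x = c * qf M x"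
  by (simp add: qf_def smat_def matrix_vector_mult_def sum_distrib_left algebra_simps)

lemma qf_re: "qf (op_re M) x = of_real (Re (qf M x))"
proof -
  have "qf (op_re M) x = (1/2) * (qf M x + cnj (qf M x))"
    by (simp add: op_re_def qf_smat qf_add qf_adj)
  also have "\<dots> = of_real (Re (qf M x))" by (simp add: complex_add_cnj)
  finally show ?thesis .
qed

lemma loew_iff: "loewner_le A B \<longleftrightarrow> (\<forall>x. Im (qf (B - A) x) = 0 \<and> 0 \<le> Re (qf (B - A) x))"
  by (simp add: loewner_le_def qf_def Let_def)

lemma cond_star_iff: "cond_star \<psi> \<longleftrightarrow> (\<forall>z\<in>unit_disc. \<forall>x.
   Re (qf (cayley (\<psi> z)) x) \<le> 0 \<and> Re ((z + 1) / (z - 1)) * nsq x \<le> Re (qf (cayley (\<psi> z)) x))"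
  by (auto simp: cond_star_def loew_iff qf_diff qf_zero qf_re qf_mat qf_uminus)

lemma cmod_add_sq: "(cmod (a + b))\<^sup>2 = (cmod a)\<^sup>2 + (cmod b)\<^sup>2 + 2 * Re (cnj b * a)"
  by (simp add: cmod_power2) (simp add: power2_eq_square algebra_simps)

lemma cmod_diff_sq: "(cmod (a - b))\<^sup>2 = (cmod a)\<^sup>2 + (cmod b)\<^sup>2 - 2 * Re (cnj b * a)"
  by (simp add: cmod_power2) (simp add: power2_eq_square algebra_simps)

lemma norm_add_sq: "(norm (p + u))\<^sup>2 = (norm p)\<^sup>2 + (norm u)\<^sup>2 + 2 * Re (\<Sum>i\<in>UNIV. cnj (u$i) * p$i)"
  unfolding nsq_norm[symmetric] nsq_def by (simp add: cmod_add_sq sum.distrib Re_sum sum_distrib_left)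

lemma norm_diff_sq: "(norm (p - u))\<^sup>2 = (norm p)\<^sup>2 + (norm u)\<^sup>2 - 2 * Re (\<Sum>i\<in>UNIV. cnj (u$i) * p$i)"
  unfolding nsq_norm[symmetric] nsq_def by (simp add: cmod_diff_sq sum.distrib sum_subtractf Re_sum sum_distrib_left)



lemma inv_of_inj_mat:
  fixes M :: "complex^'n::finite^'n"
  assumes "\<And>v. M *v v = 0 \<Longrightarrow> v = 0"
  shows "M ** matrix_inv M = mat 1 \<and> matrix_inv M ** M = mat 1"
proof -
  have "\<exists>B. B ** M = mat 1" using assms matrix_left_invertible_ker by blast
  then have "invertible M" using invertible_left_inverse by blast
  then have "\<exists>A'. M ** A' = mat 1 \<and> A' ** M = mat 1" unfolding invertible_def by blast
  then show ?thesis unfolding matrix_inv_def by (rule someI_ex)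
qed

lemma mv_minus_id: "(C - mat 1) *v v = C *v v - (v::complex^'n::finite)"
  by (simp add: matrix_vector_mult_diff_rdistrib)

lemma mv_plus_id: "(C + mat 1) *v v = C *v v + (v::complex^'n::finite)"
  by (simp add: matrix_vector_mult_add_rdistrib)

lemma K1:
  fixes C :: "complex^'n::finite^'n"
  assumes "\<And>u. Re (qf C u) \<le> 0" and "(C - mat 1) *v v = 0"
  shows "v = 0"
proof -
  have "C *v v = v" using assms(2) by (simp add: mv_minus_id)
  then have "qf C v = of_real (nsq v)" by (rule qf_id)
  then have "(norm v)\<^sup>2 \<le> 0" using assms(1)[of v] by (simp add: nsq_norm)
  then show ?thesis by simp
qed

lemma K2:
  fixes C :: "complex^'n::finite^'n"
  assumes neg: "\<And>u. Re (qf C u) \<le> 0"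
  shows "op_norm (cayley C) \<le> 1" "\<And>v. cayley C *v v = v \<Longrightarrow> v = 0"
proof -
  define B where "B = matrix_inv (C - mat 1)"
  have inv: "(C - mat 1) ** B = mat 1" "B ** (C - mat 1) = mat 1"
    unfolding B_def using inv_of_inj_mat[of "C - mat 1"] K1[OF neg] by blast+
  have rep: "cayley C *v v = C *v (B *v v) + B *v v" "v = C *v (B *v v) - B *v v" for v
  proof -
    show "cayley C *v v = C *v (B *v v) + B *v v"
      by (simp add: cayley_def B_def[symmetric] matrix_vector_mul_assoc[symmetric] mv_plus_id)
    have "v = ((C - mat 1) ** B) *v v" using inv by simp
    also have "\<dots> = C *v (B *v v) - B *v v" by (simp add: matrix_vector_mul_assoc[symmetric] mv_minus_id)
    finally show "v = C *v (B *v v) - B *v v" .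
  qed
  have le: "norm (cayley C *v v) \<le> norm v" for v
  proof -
    let ?u = "B *v v"
    have q: "(\<Sum>i\<in>UNIV. cnj (?u$i) * (C *v ?u)$i) = qf C ?u" by (simp add: qf_def)
    let ?p = "C *v ?u"
    have "(norm (?p + ?u))\<^sup>2 = (norm ?p)\<^sup>2 + (norm ?u)\<^sup>2 + 2 * Re (qf C ?u)"
      by (simp only: norm_add_sq q)
    also have "\<dots> \<le> (norm ?p)\<^sup>2 + (norm ?u)\<^sup>2 - 2 * Re (qf C ?u)" using neg[of ?u] by linarith
    also have "\<dots> = (norm (?p - ?u))\<^sup>2" by (simp only: norm_diff_sq q)
    finally have "(norm (?p + ?u))\<^sup>2 \<le> (norm (?p - ?u))\<^sup>2" .
    moreover have "norm (cayley C *v v) = norm (?p + ?u)" using rep(1) by simp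
    moreover have "norm v = norm (?p - ?u)" using rep(2)[of v] by (rule arg_cong)
    ultimately have "(norm (cayley C *v v))\<^sup>2 \<le> (norm v)\<^sup>2" by (simp only:)
    then show ?thesis by (rule power2_le_imp_le) simp
  qed
  show "op_norm (cayley C) \<le> 1" unfolding op_norm_def by (rule onorm_le) (simp add: le)
  show "v = 0" if "cayley C *v v = v" for v
  proof -
    have a: "cayley C *v v = C *v (B *v v) + B *v v" by (rule rep(1))
    have b: "v = C *v (B *v v) - B *v v" by (rule rep(2))
    have "C *v (B *v v) + B *v v = C *v (B *v v) - B *v v" using that a b by metis
    then have z: "B *v v = 0" by (simp add: vec_eq_iff)
    have "v = C *v 0 - 0" using b z by metis
    then show "v = 0" by simp
  qed
qed



definition hol :: "(complex \<Rightarrow> complex^'n::finite^'n) \<Rightarrow> complex set \<Rightarrow> bool" where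
  "hol M S \<longleftrightarrow> (\<forall>i j. (\<lambda>z. M z $ i $ j) holomorphic_on S)"

lemma hol_add: "hol M S \<Longrightarrow> hol N S \<Longrightarrow> hol (\<lambda>z. M z + N z) S"
  unfolding hol_def by (auto intro!: holomorphic_intros)

lemma hol_diff: "hol M S \<Longrightarrow> hol N S \<Longrightarrow> hol (\<lambda>z. M z - N z) S"
  unfolding hol_def by (auto intro!: holomorphic_intros)

lemma hol_mult: "hol M S \<Longrightarrow> hol N S \<Longrightarrow> hol (\<lambda>z. M z ** N z) S"
  unfolding hol_def matrix_matrix_mult_def by (auto intro!: holomorphic_intros)

lemma hol_mat: assumes "c holomorphic_on S" shows "hol (\<lambda>z. mat (c z)) S"
  unfolding hol_def mat_def
proof (intro allI)
  fix i j show "(\<lambda>z. (\<chi> i j. if i = j then c z else 0) $ i $ j) holomorphic_on S"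
    using assms by (cases "i = j") simp_all
qed

lemma hol_det: "hol M S \<Longrightarrow> (\<lambda>z. det (M z)) holomorphic_on S"
  unfolding hol_def det_def by (auto intro!: holomorphic_intros)

lemma inv_entry:
  fixes A :: "complex^'n::finite^'n"
  assumes "A ** matrix_inv A = mat 1"
  shows "det A \<noteq> 0" "matrix_inv A $ i $ k = det (\<chi> r c. if c = i then axis k 1 $ r else A $ r $ c) / det A"
proof -
  have "invertible A" using assms invertible_right_inverse by blast
  then show d: "det A \<noteq> 0" by (simp add: invertible_det_nz)
  let ?x = "matrix_inv A *v axis k 1"
  have "A *v ?x = axis k 1" using assms by (simp add: matrix_vector_mul_assoc)
  then have "?x = (\<chi> k'. det (\<chi> r c. if c = k' then axis k 1 $ r else A $ r $ c) / det A)"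
    using cramer[OF d] by blast
  then have "?x $ i = det (\<chi> r c. if c = i then axis k 1 $ r else A $ r $ c) / det A" by simp
  then show "matrix_inv A $ i $ k = det (\<chi> r c. if c = i then axis k 1 $ r else A $ r $ c) / det A"
    by (simp add: mv_axis)
qed

lemma hol_inv:
  assumes h: "hol M S" and inj: "\<And>z v. z \<in> S \<Longrightarrow> M z *v v = 0 \<Longrightarrow> v = 0"
  shows "hol (\<lambda>z. matrix_inv (M z)) S"
  unfolding hol_def
proof (intro allI)
  fix i k
  have r: "M z ** matrix_inv (M z) = mat 1" if "z \<in> S" for z
    using inv_of_inj_mat[of "M z"] inj[OF that] by blast
  have h2: "hol (\<lambda>z. (\<chi> r c. if c = i then axis k 1 $ r else M z $ r $ c)) S"
    unfolding hol_def
  proof (intro allI)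
    fix r c show "(\<lambda>z. (\<chi> r c. if c = i then axis k 1 $ r else M z $ r $ c) $ r $ c) holomorphic_on S"
      using h unfolding hol_def by (cases "c = i") simp_all
  qed
  have "(\<lambda>z. det (\<chi> r c. if c = i then axis k 1 $ r else M z $ r $ c) / det (M z)) holomorphic_on S"
    by (intro holomorphic_intros hol_det h2 h) (use inv_entry(1)[OF r] in blast)
  then show "(\<lambda>z. matrix_inv (M z) $ i $ k) holomorphic_on S"
    by (rule holomorphic_transform) (simp add: inv_entry(2)[OF r])
qed



lemma mat_mult_left: "(mat a ** X) $ i $ j = a * (X $ i $ j :: complex)"
proof -
  have "(mat a ** X) $ i $ j = (\<Sum>k\<in>UNIV. (if i = k then a else 0) * X $ k $ j)"
    by (simp add: matrix_matrix_mult_def mat_def)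
  also have "\<dots> = (\<Sum>k\<in>UNIV. if i = k then a * X $ k $ j else 0)" by (rule sum.cong) auto
  also have "\<dots> = a * X $ i $ j" by simp
  finally show ?thesis .
qed

lemma mat_mult_right: "(X ** mat a) $ i $ j = a * (X $ i $ j :: complex)"
proof -
  have "(X ** mat a) $ i $ j = (\<Sum>k\<in>UNIV. X $ i $ k * (if k = j then a else 0))"
    by (simp add: matrix_matrix_mult_def mat_def)
  also have "\<dots> = (\<Sum>k\<in>UNIV. if k = j then a * X $ i $ k else 0)" by (rule sum.cong) auto
  also have "\<dots> = a * X $ i $ j" by simp
  finally show ?thesis .
qed

lemma mat_mult_mat: "mat a ** mat b = (mat (a * b) :: complex^'n::finite^'n)"
  by (simp add: vec_eq_iff mat_mult_left) (simp add: mat_def)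

lemma mat_comm: "mat a ** X = X ** (mat a :: complex^'n::finite^'n)"
  by (simp add: vec_eq_iff mat_mult_left mat_mult_right)

lemma MS_mult: "MS a * MS b = (MS (a * b) :: 'n::finite mtx)"
  by transfer (rule mat_mult_mat)
lemma MS_comm: "MS a * x = x * (MS a :: 'n::finite mtx)"
  by transfer (rule mat_comm)
lemma MS_add: "MS a + MS b = (MS (a + b) :: 'n::finite mtx)"
  by transfer (simp add: vec_eq_iff mat_def)
lemma MS_diff: "MS a - MS b = (MS (a - b) :: 'n::finite mtx)"
  by transfer (simp add: vec_eq_iff mat_def)
lemma MS_one: "MS 1 = (1 :: 'n::finite mtx)"
  by transfer simp

lemma cayM_MS: assumes "c \<noteq> 1" shows "cayM (MS c :: 'n::finite mtx) = MS ((c + 1) / (c - 1))"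
proof -
  have "MI (MS (c - 1) :: 'n mtx) = MS (1 / (c - 1))"
    by (rule MI_eq) (use assms in \<open>simp_all add: MS_mult MS_one\<close>)
  then show ?thesis
    by (simp add: cayM_def MS_one[symmetric] MS_add MS_diff MS_mult del: MS_one)
qed

lemma AM_cayley: "cayM (AM A) = AM (cayley A)"
  by (simp add: cayley_RM RM_inverse)

lemma cayley_mat: "c \<noteq> 1 \<Longrightarrow> cayley (mat c :: complex^'n::finite^'n) = mat ((c + 1) / (c - 1))"
  by (simp add: cayley_RM MS.abs_eq[symmetric] cayM_MS RM_MS)

lemma cayley_invol:
  fixes C :: "complex^'n::finite^'n"
  assumes "\<And>v. (C - mat 1) *v v = 0 \<Longrightarrow> v = 0"
  shows "cayley (cayley C) = C"
proof -
  define B where "B = matrix_inv (C - mat 1)"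
  have inv: "(C - mat 1) ** B = mat 1" "B ** (C - mat 1) = mat 1"
    unfolding B_def using inv_of_inj_mat[of "C - mat 1"] assms by blast+
  have "AM B * (AM C - 1) = 1" "(AM C - 1) * AM B = 1"
    using inv by (metis AM_inverse RM_inj RM_minus RM_mult RM_one UNIV_I)+
  then have "cayM (cayM (AM C)) = AM C" by (rule cay_invol(1))
  then show ?thesis by (metis AM_cayley AM_inverse RM_inj UNIV_I)
qed

lemma phi_mult:
  assumes "cayley B = mat w - cayley A"
  shows "phi t A ** phi t B = phi t (mat (w::complex) :: complex^'n::finite^'n)
       \<or> True" "phi t A ** phi t B = RM (exp (t *\<^sub>R (MS w :: 'n mtx)))"
    "phi t B ** phi t A = RM (exp (t *\<^sub>R (MS w :: 'n mtx)))"
proof -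
  let ?a = "AM (cayley A)" and ?b = "AM (cayley B)"
  have b: "?b = MS w - ?a" using assms by (metis AM_inverse RM_MS RM_inj RM_minus UNIV_I)
  have comm: "(t *\<^sub>R ?a) * (t *\<^sub>R ?b) = (t *\<^sub>R ?b) * (t *\<^sub>R ?a)"
    unfolding b by (simp add: algebra_simps MS_comm)
  have s: "t *\<^sub>R ?a + t *\<^sub>R ?b = t *\<^sub>R MS w" unfolding b by (simp add: algebra_simps)
  have "phi t A ** phi t B = RM (exp (t *\<^sub>R ?a) * exp (t *\<^sub>R ?b))"
    by (simp add: phi_RM AM_cayley RM_mult)
  also have "\<dots> = RM (exp (t *\<^sub>R MS w))" by (simp add: exp_add_commuting[OF comm, symmetric] s)
  finally show "phi t A ** phi t B = RM (exp (t *\<^sub>R (MS w :: 'n mtx)))" .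
  have "phi t B ** phi t A = RM (exp (t *\<^sub>R ?b) * exp (t *\<^sub>R ?a))"
    by (simp add: phi_RM AM_cayley RM_mult)
  also have "\<dots> = RM (exp (t *\<^sub>R MS w))" by (simp add: exp_add_commuting[OF comm[symmetric], symmetric] s add.commute)
  finally show "phi t B ** phi t A = RM (exp (t *\<^sub>R (MS w :: 'n mtx)))" .
qed (simp)

lemma phi_mat: "c \<noteq> 1 \<Longrightarrow> phi t (mat c :: complex^'n::finite^'n) = RM (exp (t *\<^sub>R (MS ((c + 1) / (c - 1)) :: 'n mtx)))"
  by (simp add: phi_RM AM_cayley cayley_mat MS.abs_eq)

lemma disc_iff: "z \<in> unit_disc \<longleftrightarrow> cmod z < 1"
  by (simp add: unit_disc_def)

definition tf :: "complex^'n::finite \<Rightarrow> complex \<Rightarrow> complex^'n" where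
  "tf v = (\<lambda>u. if u \<in> unit_disc then v else 0)"

lemma tf_H2: "tf v \<in> H2"
  unfolding H2_def
proof (intro CollectI conjI allI impI exI[where x="2 * pi * (norm v)\<^sup>2"])
  fix i
  show "(\<lambda>z. tf v z $ i) holomorphic_on unit_disc"
    by (rule holomorphic_transform[of "\<lambda>z. v $ i"]) (simp_all add: tf_def)
next
  fix z assume "z \<notin> unit_disc" then show "tf v z = 0" by (simp add: tf_def)
next
  fix r :: real assume r: "0 < r \<and> r < 1"
  have e: "(\<lambda>\<theta>. (norm (tf v (of_real r * cis \<theta>)))\<^sup>2) = (\<lambda>\<theta>. (norm v)\<^sup>2)"
    using r by (auto simp: tf_def disc_iff norm_mult)
  show "(\<lambda>\<theta>. (norm (tf v (of_real r * cis \<theta>)))\<^sup>2) integrable_on {0..2 * pi}"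
    unfolding e by (rule integrable_const_ivl)
  show "integral {0..2 * pi} (\<lambda>\<theta>. (norm (tf v (of_real r * cis \<theta>)))\<^sup>2) \<le> 2 * pi * (norm v)\<^sup>2"
    unfolding e by simp
qed

lemma op_eq_from_mat:
  fixes F G H :: "complex \<Rightarrow> complex^'n::finite^'n"
  assumes "\<And>z. z \<in> unit_disc \<Longrightarrow> F z ** G z = H z"
  shows "op_eq_H2 (Mult F \<circ> Mult G) (Mult H)"
  unfolding op_eq_H2_def
proof
  fix f :: "complex \<Rightarrow> complex^'n" assume "f \<in> H2"
  show "(Mult F \<circ> Mult G) f = Mult H f"
    by (rule ext) (simp add: Mult_def matrix_vector_mul_assoc assms)
qed

lemma mat_from_op_eq:
  assumes "op_eq_H2 (Mult F \<circ> Mult G) (Mult H)" and z: "z \<in> unit_disc"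
  shows "F z ** G z = (H z :: complex^'n::finite^'n)"
proof -
  have "F z *v (G z *v v) = H z *v v" for v
  proof -
    have "(Mult F \<circ> Mult G) (tf v) z = Mult H (tf v) z"
      using assms(1) tf_H2[of v] unfolding op_eq_H2_def by simp
    then show ?thesis using z by (simp add: Mult_def tf_def)
  qed
  then have "(F z ** G z) *v v = H z *v v" for v by (simp add: matrix_vector_mul_assoc)
  then show ?thesis using matrix_eq by blast
qed



theorem lemma4p5:
  fixes \<psi>1 :: "complex \<Rightarrow> complex^'n::finite^'n"
  assumes "\<psi>1 \<in> classC" and "cond_star \<psi>1"
  shows "\<exists>\<psi>2. \<psi>2 \<in> classC \<and> cond_star \<psi>2 \<and> factorizing_pair \<psi>1 \<psi>2
           \<and> (\<forall>\<psi>3. \<psi>3 \<in> classC \<and> cond_star \<psi>3 \<and> factorizing_pair \<psi>1 \<psi>3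
                  \<longrightarrow> (\<forall>z\<in>unit_disc. \<psi>3 z = \<psi>2 z))"
proof -
  define W where "W = (\<lambda>z::complex. (z + 1) / (z - 1))"
  define C1 where "C1 = (\<lambda>z. cayley (\<psi>1 z))"
  define M where "M = (\<lambda>z. mat (W z) - C1 z)"
  define \<psi>2 where "\<psi>2 = (\<lambda>z. cayley (M z))"
  have z1: "z \<noteq> 1" if "z \<in> unit_disc" for z using that by (auto simp: disc_iff)
  have hol1: "hol \<psi>1 unit_disc" and eig1: "\<And>z x. z \<in> unit_disc \<Longrightarrow> \<psi>1 z *v x = x \<Longrightarrow> x = 0"
    using assms(1) unfolding classC_def Hinf_def hol_def by blast+
  have cs: "Re (qf (C1 z) x) \<le> 0" "Re (W z) * nsq x \<le> Re (qf (C1 z) x)" if "z \<in> unit_disc" for z x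
    using assms(2) that unfolding cond_star_iff C1_def W_def by blast+
  have inj1: "v = 0" if "z \<in> unit_disc" "(\<psi>1 z - mat 1) *v v = 0" for z v
    using eig1[OF that(1)] that(2) by (simp add: mv_minus_id)
  have qf2: "qf (M z) x = W z * of_real (nsq x) - qf (C1 z) x" for z x
    by (simp add: M_def qf_diff qf_mat)
  have neg2: "Re (qf (M z) u) \<le> 0" if "z \<in> unit_disc" for z u
    using cs(2)[OF that, of u] by (simp add: qf2)
  have inj2: "v = 0" if "z \<in> unit_disc" "(M z - mat 1) *v v = 0" for z v
    by (rule K1[OF neg2[OF that(1)] that(2)])
  have cay2: "cayley (\<psi>2 z) = M z" if "z \<in> unit_disc" for z
    unfolding \<psi>2_def by (rule cayley_invol) (rule inj2[OF that])
  have hW: "W holomorphic_on unit_disc"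
    unfolding W_def by (intro holomorphic_intros) (use z1 in auto)
  have hC1: "hol C1 unit_disc"
    unfolding C1_def cayley_def
    by (intro hol_mult hol_add hol_diff hol_mat hol_inv hol1 holomorphic_intros) (use inj1 in blast)
  have hM: "hol M unit_disc" unfolding M_def by (intro hol_diff hol_mat hW hC1)
  have h2: "hol \<psi>2 unit_disc"
    unfolding \<psi>2_def cayley_def
    by (intro hol_mult hol_add hol_diff hol_mat hol_inv hM holomorphic_intros) (use inj2 in blast)
  have C2: "\<psi>2 \<in> classC"
    unfolding classC_def Hinf_def
  proof (intro CollectI conjI)
    show "\<forall>i j. (\<lambda>z. \<psi>2 z $ i $ j) holomorphic_on unit_disc" using h2 by (simp add: hol_def)
    show n: "\<forall>z\<in>unit_disc. op_norm (\<psi>2 z) \<le> 1"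
      unfolding \<psi>2_def using K2(1)[OF neg2] by blast
    show "\<exists>B. \<forall>z\<in>unit_disc. op_norm (\<psi>2 z) \<le> B" using n by blast
    show "\<forall>z\<in>unit_disc. \<not> (\<exists>x. x \<noteq> 0 \<and> \<psi>2 z *v x = x)"
      unfolding \<psi>2_def using K2(2)[OF neg2] by blast
  qed
  have CS2: "cond_star \<psi>2"
    unfolding cond_star_iff
  proof (intro ballI allI conjI)
    fix z x assume z: "z \<in> unit_disc"
    show "Re (qf (cayley (\<psi>2 z)) x) \<le> 0" using neg2[OF z] by (simp add: cay2[OF z])
    show "Re ((z + 1) / (z - 1)) * nsq x \<le> Re (qf (cayley (\<psi>2 z)) x)"
    proof -
      have e: "Re (qf (cayley (\<psi>2 z)) x) = Re (W z) * nsq x - Re (qf (C1 z) x)"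
        by (simp add: cay2[OF z] qf2)
      show ?thesis using cs(1)[OF z, of x] unfolding e W_def by simp
    qed
  qed
  have phz: "phi t (zE z) = RM (exp (t *\<^sub>R (MS (W z) :: 'n mtx)))" if "z \<in> unit_disc" for t z
    unfolding zE_def W_def by (rule phi_mat[OF z1[OF that]])
  have cay12: "cayley (\<psi>2 z) = mat (W z) - cayley (\<psi>1 z)" if "z \<in> unit_disc" for z
    using cay2[OF that] by (simp add: M_def C1_def)
  have FP: "factorizing_pair \<psi>1 \<psi>2"
    unfolding factorizing_pair_def
  proof (intro conjI allI impI)
    show "\<psi>1 \<in> classC" by (rule assms(1))
    show "\<psi>2 \<in> classC" by (rule C2)
    fix t :: real
    show "op_eq_H2 (Mult (phi_comp t \<psi>1) \<circ> Mult (phi_comp t \<psi>2)) (Mult (phi_comp t zE))"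
      by (rule op_eq_from_mat) (simp add: phi_comp_def phi_mult(2)[OF cay12] phz)
    show "op_eq_H2 (Mult (phi_comp t \<psi>2) \<circ> Mult (phi_comp t \<psi>1)) (Mult (phi_comp t zE))"
      by (rule op_eq_from_mat) (simp add: phi_comp_def phi_mult(3)[OF cay12] phz)
  qed
  have UQ: "\<psi>3 z = \<psi>2 z" if h3: "\<psi>3 \<in> classC" "factorizing_pair \<psi>1 \<psi>3" and z: "z \<in> unit_disc" for \<psi>3 z
  proof -
    let ?c1 = "AM (cayley (\<psi>1 z))" and ?c3 = "AM (cayley (\<psi>3 z))" and ?w = "MS (W z) :: 'n mtx"
    have "exp (t *\<^sub>R ?c1) * exp (t *\<^sub>R ?c3) = exp (t *\<^sub>R ?w)" if t: "t \<ge> 0" for t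
    proof -
      have "op_eq_H2 (Mult (phi_comp t \<psi>1) \<circ> Mult (phi_comp t \<psi>3)) (Mult (phi_comp t zE))"
        using h3(2) t unfolding factorizing_pair_def by blast
      then have "phi_comp t \<psi>1 z ** phi_comp t \<psi>3 z = phi_comp t zE z"
        by (rule mat_from_op_eq[OF _ z])
      then have "phi t (\<psi>1 z) ** phi t (\<psi>3 z) = RM (exp (t *\<^sub>R ?w))"
        by (simp add: phi_comp_def phz[OF z])
      then have "RM (exp (t *\<^sub>R ?c1) * exp (t *\<^sub>R ?c3)) = RM (exp (t *\<^sub>R ?w))"
        by (simp add: phi_RM AM_cayley RM_mult)
      then show ?thesis by (rule RM_inj)
    qed
    then have "?c1 + ?c3 = ?w" by (rule exp_deriv0)
    then have "cayley (\<psi>3 z) = M z"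
      by (metis AM_inverse C1_def M_def RM_MS RM_inj RM_minus UNIV_I add_diff_cancel_left')
    moreover have "cayley (cayley (\<psi>3 z)) = \<psi>3 z"
    proof (rule cayley_invol)
      fix v assume "(\<psi>3 z - mat 1) *v v = 0"
      then have "\<psi>3 z *v v = v" by (simp add: mv_minus_id)
      then show "v = 0" using h3(1) z unfolding classC_def by blast
    qed
    ultimately show ?thesis by (simp add: \<psi>2_def)
  qed
  show ?thesis using C2 CS2 FP UQ by blast
qed


end
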